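(* Let $\tilde f:[-\pi,\pi]\times[-1,1]\to\mathbb{C}$ be a BMC function (defined below). Fix $(\theta^*,\rho^* )\in[0,\pi]\times[0,1]$ and let $$M=\begin{bmatrix}\tilde f(\theta^*-\pi,\rho^* ) & \tilde f(\theta^*,\rho^* )\\ \tilde f(\theta^*-\pi,-\rho^* ) & \tilde f(\theta^*,-\rho^* )\end{bmatrix},$$ and assume $M$ is invertible. Define $\tilde s:[-\pi,\pi]\times[-1,1]\to\mathbb{C}$ by $$\tilde s(\theta,\rho)=\begin{bmatrix}\tilde f(\theta^*-\pi,\rho) & \tilde f(\theta^*,\rho)\end{bmatrix} M^{-1}\begin{bmatrix}\tilde f(\theta,\rho^* )\\ \tilde f(\theta,-\rho^* )\end{bmatrix}.$$ Then $\tilde s$ is also a BMC function. Consequently, the update $\tilde f\leftarrow \tilde f-\tilde s$ (a structure-preserving Gaussian elimination step with $2\times 2$ pivot $M$) maps BMC functions to BMC functions.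
   Context: A function $\tilde f:[-\pi,\pi]\times[-1,1]\to\mathbb{C}$ is called a BMC (block-mirror centrosymmetric) function if there are functions $g,h:[0,\pi]\times[0,1]\to\mathbb{C}$ such that $\tilde f(\theta,\rho)=g(\theta+\pi,\rho)$ for $(\theta,\rho)\in[-\pi,0]\times[0,1]$; $\tilde f(\theta,\rho)=h(\theta,\rho)$ for $(\theta,\rho)\in[0,\pi]\times[0,1]$; $\tilde f(\theta,\rho)=g(\theta,-\rho)$ for $(\theta,\rho)\in[0,\pi]\times[-1,0]$; $\tilde f(\theta,\rho)=h(\theta+\pi,-\rho)$ for $(\theta,\rho)\in[-\pi,0]\times[-1,0]$. Equivalently, $\tilde f(\theta,\rho)=\tilde f(\theta+\pi,-\rho)$ for all $(\theta,\rho)\in[-\pi,0]\times[-1,1]$. *)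

theory Defs
  imports "HOL-Analysis.Analysis"
begin

text \<open>Functions on [-pi,pi] x [-1,1] are modelled as total functions real => real => complex;
  only their values on the rectangle matter.  BMC is defined exactly as in the paper.\<close>

definition BMC :: "(real \<Rightarrow> real \<Rightarrow> complex) \<Rightarrow> bool" where
  "BMC f \<longleftrightarrow> (\<exists>g h :: real \<Rightarrow> real \<Rightarrow> complex.
     (\<forall>\<theta> \<rho>. \<theta> \<in> {-pi..0} \<and> \<rho> \<in> {0..1} \<longrightarrow> f \<theta> \<rho> = g (\<theta> + pi) \<rho>) \<and>
     (\<forall>\<theta> \<rho>. \<theta> \<in> {0..pi} \<and> \<rho> \<in> {0..1} \<longrightarrow> f \<theta> \<rho> = h \<theta> \<rho>) \<and>
     (\<forall>\<theta> \<rho>. \<theta> \<in> {0..pi} \<and> \<rho> \<in> {-1..0} \<longrightarrow> f \<theta> \<rho> = g \<theta> (-\<rho>)) \<and>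
     (\<forall>\<theta> \<rho>. \<theta> \<in> {-pi..0} \<and> \<rho> \<in> {-1..0} \<longrightarrow> f \<theta> \<rho> = h (\<theta> + pi) (-\<rho>)))"

definition pivot_matrix :: "(real \<Rightarrow> real \<Rightarrow> complex) \<Rightarrow> real \<Rightarrow> real \<Rightarrow> complex^2^2" where
  "pivot_matrix f ts rs =
     vector [vector [f (ts - pi) rs, f ts rs], vector [f (ts - pi) (-rs), f ts (-rs)]]"

definition schur_update :: "(real \<Rightarrow> real \<Rightarrow> complex) \<Rightarrow> real \<Rightarrow> real \<Rightarrow> real \<Rightarrow> real \<Rightarrow> complex" where
  "schur_update f ts rs \<theta> \<rho> =
     (let r = (vector [f (ts - pi) \<rho>, f ts \<rho>] :: complex^2);
          c = (vector [f \<theta> rs, f \<theta> (-rs)] :: complex^2);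
          w = r v* matrix_inv (pivot_matrix f ts rs)
      in \<Sum>i\<in>UNIV. w $ i * c $ i)"

end

theory Submission
  imports Defs
begin

lemma BMC_iff:
  "BMC f \<longleftrightarrow> (\<forall>\<theta> \<rho>. \<theta> \<in> {-pi..0} \<and> \<rho> \<in> {-1..1} \<longrightarrow> f \<theta> \<rho> = f (\<theta> + pi) (-\<rho>))"
proof
  assume "BMC f"
  then obtain g h where g1: "\<forall>\<theta> \<rho>. \<theta> \<in> {-pi..0} \<and> \<rho> \<in> {0..1} \<longrightarrow> f \<theta> \<rho> = g (\<theta> + pi) \<rho>"
    and h2: "\<forall>\<theta> \<rho>. \<theta> \<in> {0..pi} \<and> \<rho> \<in> {0..1} \<longrightarrow> f \<theta> \<rho> = h \<theta> \<rho>"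
    and g3: "\<forall>\<theta> \<rho>. \<theta> \<in> {0..pi} \<and> \<rho> \<in> {-1..0} \<longrightarrow> f \<theta> \<rho> = g \<theta> (-\<rho>)"
    and h4: "\<forall>\<theta> \<rho>. \<theta> \<in> {-pi..0} \<and> \<rho> \<in> {-1..0} \<longrightarrow> f \<theta> \<rho> = h (\<theta> + pi) (-\<rho>)"
    unfolding BMC_def by blast
  show "\<forall>\<theta> \<rho>. \<theta> \<in> {-pi..0} \<and> \<rho> \<in> {-1..1} \<longrightarrow> f \<theta> \<rho> = f (\<theta> + pi) (-\<rho>)"
  proof (intro allI impI)
    fix \<theta> \<rho> :: real assume a: "\<theta> \<in> {-pi..0} \<and> \<rho> \<in> {-1..1}"
    show "f \<theta> \<rho> = f (\<theta> + pi) (-\<rho>)"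
    proof (cases "\<rho> \<ge> 0")
      case True
      then show ?thesis using a g1[rule_format, of \<theta> \<rho>] g3[rule_format, of "\<theta>+pi" "-\<rho>"] by auto
    next
      case False
      then show ?thesis using a h4[rule_format, of \<theta> \<rho>] h2[rule_format, of "\<theta>+pi" "-\<rho>"] by auto
    qed
  qed
next
  assume S: "\<forall>\<theta> \<rho>. \<theta> \<in> {-pi..0} \<and> \<rho> \<in> {-1..1} \<longrightarrow> f \<theta> \<rho> = f (\<theta> + pi) (-\<rho>)"
  show "BMC f" unfolding BMC_def
    apply (rule exI[of _ "\<lambda>\<theta> \<rho>. f \<theta> (-\<rho>)"])
    apply (rule exI[of _ f])
    using S by auto
qed

theorem lemma3p1:
  fixes f :: "real \<Rightarrow> real \<Rightarrow> complex" and ts rs :: real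
  assumes "BMC f"
    and "ts \<in> {0..pi}" and "rs \<in> {0..1}"
    and "invertible (pivot_matrix f ts rs)"
  shows "BMC (schur_update f ts rs)
       \<and> BMC (\<lambda>\<theta> \<rho>. f \<theta> \<rho> - schur_update f ts rs \<theta> \<rho>)"
proof -
  have S: "\<And>\<theta> \<rho>. \<theta> \<in> {-pi..0} \<Longrightarrow> \<rho> \<in> {-1..1} \<Longrightarrow> f \<theta> \<rho> = f (\<theta> + pi) (-\<rho>)"
    using assms(1) unfolding BMC_iff by blast
  define M where "M = pivot_matrix f ts rs"
  define N where "N = matrix_inv M"
  have MN: "M ** N = mat 1 \<and> N ** M = mat 1"
    using assms(4) unfolding N_def matrix_inv_def M_def invertible_def by (rule someI_ex)
  define a where "a = f (ts - pi) rs"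
  define b where "b = f ts rs"
  have ad: "f ts (-rs) = a" unfolding a_def using S[of "ts - pi" rs] assms(2,3) by auto
  have bc: "f (ts - pi) (-rs) = b" unfolding b_def using S[of "ts - pi" "-rs"] assms(2,3) by auto
  have Me: "M $ 1 $ 1 = a" "M $ 1 $ 2 = b" "M $ 2 $ 1 = b" "M $ 2 $ 2 = a"
    unfolding M_def pivot_matrix_def using ad bc by (auto simp: a_def b_def)
  have e1: "(M ** N) $ i $ j = (if i = j then 1 else 0)" "(N ** M) $ i $ j = (if i = j then 1 else 0)" for i j
    using MN by (auto simp: mat_def)
  have E: "a * N$1$1 + b * N$2$1 = 1" "a * N$1$2 + b * N$2$2 = 0"
          "b * N$1$1 + a * N$2$1 = 0" "b * N$1$2 + a * N$2$2 = 1"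
          "N$1$1 * a + N$1$2 * b = 1" "N$1$1 * b + N$1$2 * a = 0"
          "N$2$1 * a + N$2$2 * b = 0" "N$2$1 * b + N$2$2 * a = 1"
    using e1[of 1 1] e1[of 1 2] e1[of 2 1] e1[of 2 2]
    by (simp_all add: matrix_matrix_mult_def sum_2 Me)
  have n1: "N$1$1 = N$2$2"
  proof -
    have "a * (N$1$1 - N$2$2) = (a * N$1$1 + b * N$2$1) - (N$2$1 * b + N$2$2 * a)" by (simp add: algebra_simps)
    then have "a * (N$1$1 - N$2$2) = 0" using E(1,8) by simp
    moreover have "b * (N$1$1 - N$2$2) = (b * N$1$1 + a * N$2$1) - (N$2$1 * a + N$2$2 * b)" by (simp add: algebra_simps)
    then have "b * (N$1$1 - N$2$2) = 0" using E(3,7) by simp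
    moreover have "a \<noteq> 0 \<or> b \<noteq> 0" using E(1) by auto
    ultimately show ?thesis by auto
  qed
  have n2: "N$1$2 = N$2$1"
  proof -
    have "a * (N$1$2 - N$2$1) = (a * N$1$2 + b * N$2$2) - (N$2$1 * a + N$2$2 * b)" by (simp add: algebra_simps)
    then have "a * (N$1$2 - N$2$1) = 0" using E(2,7) by simp
    moreover have "b * (N$1$2 - N$2$1) = (b * N$1$2 + a * N$2$2) - (N$2$1 * b + N$2$2 * a)" by (simp add: algebra_simps)
    then have "b * (N$1$2 - N$2$1) = 0" using E(4,8) by simp
    moreover have "a \<noteq> 0 \<or> b \<noteq> 0" using E(1) by auto
    ultimately show ?thesis by auto
  qed
  have su: "schur_update f ts rs \<theta> \<rho> =
     (f (ts - pi) \<rho> * N$1$1 + f ts \<rho> * N$2$1) * f \<theta> rs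
   + (f (ts - pi) \<rho> * N$1$2 + f ts \<rho> * N$2$2) * f \<theta> (-rs)" for \<theta> \<rho>
    unfolding schur_update_def Let_def M_def[symmetric] N_def[symmetric]
    by (simp add: vector_matrix_mult_def sum_2 algebra_simps)
  have symS: "schur_update f ts rs \<theta> \<rho> = schur_update f ts rs (\<theta> + pi) (-\<rho>)"
    if "\<theta> \<in> {-pi..0}" "\<rho> \<in> {-1..1}" for \<theta> \<rho>
  proof -
    have r1: "f (ts - pi) (-\<rho>) = f ts \<rho>" using S[of "ts - pi" "-\<rho>"] assms(2) that by auto
    have r2: "f ts (-\<rho>) = f (ts - pi) \<rho>" using S[of "ts - pi" "\<rho>"] assms(2) that by auto
    have c1: "f (\<theta> + pi) rs = f \<theta> (-rs)" using S[of \<theta> "-rs"] assms(3) that by auto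
    have c2: "f (\<theta> + pi) (-rs) = f \<theta> rs" using S[of \<theta> "rs"] assms(3) that by auto
    show ?thesis unfolding su r1 r2 c1 c2 n1 n2 by (simp add: algebra_simps)
  qed
  show ?thesis unfolding BMC_iff using symS S by simp
qed

end
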